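(* Let $P$ be a closed process of the Value-Passing Quality Calculus in which variables and names are bound exactly once, and let $l$ be a label. For any input variable $x$ in $P$, there exists exactly one formula $\varphi \Rightarrow \bar{x}$ in the translation $P^l_{\Rightarrow}$, and $\bar{x}$ does not occur in $\varphi$.
   Context: Syntax: $P ::= \mathsf{0} \mid (\nu c)P \mid P_1 \mid P_2 \mid {^l}b.P \mid {^l}\bar{c}\langle t\rangle.P \mid\ !P \mid {^l}\mathsf{case}\ x\ \mathsf{of}\ \mathsf{some}(y): P_1\ \mathsf{else}\ P_2$; binders $b ::= c?x \mid \&_q(b_1,\dots,b_n)$ where $q$ is a quality guard, a Boolean predicate $[\![q]\!]$ (e.g. $[\![\forall]\!]$ = conjunction, $[\![\exists]\!]$ = disjunction); terms $t ::= c \mid y$. Input variables $x$ are bound by binders $c?x$; labels are unique. Translation: $T(\mathsf{0},\varphi)=\emptyset$; $T(!P,\varphi)=T(P,\varphi)$; $T(P_1\mid P_2,\varphi)=T(P_1,\varphi)\cup T(P_2,\varphi)$; $T((\nu c)P,\varphi)=T(P,\varphi)$; $T({^l}b.P,\varphi)=T(P,\varphi\wedge \mathsf{hp}(b))\cup\mathsf{th}(\varphi,b)\cup\{\varphi\leadsto\bar{l}\}$; $T({^l}\bar{c}\langle t\rangle.P,\varphi)=T(P,\varphi)\cup\{\varphi\leadsto\bar{c}\}\cup\{\varphi\leadsto\bar{l}\}$; $T({^l}\mathsf{case}\ x\ \mathsf{of}\ \mathsf{some}(y):P_1\ \mathsf{else}\ P_2,\varphi)=T(P_1,\varphi\wedge\bar{x})\cup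 T(P_2,\varphi\wedge\neg\bar{x})\cup\{\varphi\leadsto\bar{l}\}$; with $\mathsf{hp}(c?x)=\bar{c}$, $\mathsf{th}(\varphi,c?x)=\{(\varphi\wedge\bar{c})\leadsto\bar{x}\}$, $\mathsf{hp}(\&_q(b_1,\dots,b_n))=[\![q]\!](\mathsf{hp}(b_1),\dots,\mathsf{hp}(b_n))$, $\mathsf{th}(\varphi,\&_q(b_1,\dots,b_n))=\bigcup_i\mathsf{th}(\varphi,b_i)$. Here $\bar{c},\bar{x},\bar{l}$ are propositional literals for channels, input variables and labels. The set $T(P,\mathsf{tt})$ is normalised by replacing any two constraints $\varphi\leadsto\bar{p}$, $\varphi'\leadsto\bar{p}$ with the same consequent by $(\varphi\vee\varphi')\leadsto\bar{p}$. $P^l_{\Rightarrow}$ is the resulting normalised set with each $\leadsto$ read as propositional implication $\Rightarrow$. *)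

theory Defs
  imports Main
begin

text \<open>Type parameters: 'n channel names, 'x input variables (bound by binders c?x),
  'y data variables (bound by case), 'l labels.  A quality guard q is represented by
  its Boolean predicate [[q]] on the list of truth values of the sub-binders.\<close>

type_synonym qguard = "bool list \<Rightarrow> bool"

datatype ('n, 'x) qbinder =
    BIn 'n 'x
  | BQ qguard "('n, 'x) qbinder list"

datatype ('n, 'y) pterm = TName 'n | TVar 'y

datatype ('n, 'x, 'y, 'l) proc =
    PNil
  | PNu 'n "('n, 'x, 'y, 'l) proc"
  | PPar "('n, 'x, 'y, 'l) proc" "('n, 'x, 'y, 'l) proc"
  | PInp 'l "('n, 'x) qbinder" "('n, 'x, 'y, 'l) proc"
  | POut 'l 'n "('n, 'y) pterm" "('n, 'x, 'y, 'l) proc"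
  | PBang "('n, 'x, 'y, 'l) proc"
  | PCase 'l 'x 'y "('n, 'x, 'y, 'l) proc" "('n, 'x, 'y, 'l) proc"
      (* ^l case x of some(y): P1 else P2 *)

fun bvb :: "('n, 'x) qbinder \<Rightarrow> 'x list" where
  "bvb (BIn c x) = [x]"
| "bvb (BQ q bs) = concat (map bvb bs)"

fun fvt :: "('n, 'y) pterm \<Rightarrow> 'y set" where
  "fvt (TName c) = {}"
| "fvt (TVar y) = {y}"

fun fvx :: "('n, 'x, 'y, 'l) proc \<Rightarrow> 'x set" where
  "fvx PNil = {}"
| "fvx (PNu c P) = fvx P"
| "fvx (PPar P Q) = fvx P \<union> fvx Q"
| "fvx (PInp l b P) = fvx P - set (bvb b)"
| "fvx (POut l c t P) = fvx P"
| "fvx (PBang P) = fvx P"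
| "fvx (PCase l x y P1 P2) = {x} \<union> fvx P1 \<union> fvx P2"

fun fvy :: "('n, 'x, 'y, 'l) proc \<Rightarrow> 'y set" where
  "fvy PNil = {}"
| "fvy (PNu c P) = fvy P"
| "fvy (PPar P Q) = fvy P \<union> fvy Q"
| "fvy (PInp l b P) = fvy P"
| "fvy (POut l c t P) = fvt t \<union> fvy P"
| "fvy (PBang P) = fvy P"
| "fvy (PCase l x y P1 P2) = (fvy P1 - {y}) \<union> fvy P2"

definition closed :: "('n, 'x, 'y, 'l) proc \<Rightarrow> bool" where
  "closed P \<longleftrightarrow> fvx P = {} \<and> fvy P = {}"

fun bx :: "('n, 'x, 'y, 'l) proc \<Rightarrow> 'x list" where
  "bx PNil = []"
| "bx (PNu c P) = bx P"
| "bx (PPar P Q) = bx P @ bx Q"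
| "bx (PInp l b P) = bvb b @ bx P"
| "bx (POut l c t P) = bx P"
| "bx (PBang P) = bx P"
| "bx (PCase l x y P1 P2) = bx P1 @ bx P2"

fun bys :: "('n, 'x, 'y, 'l) proc \<Rightarrow> 'y list" where
  "bys PNil = []"
| "bys (PNu c P) = bys P"
| "bys (PPar P Q) = bys P @ bys Q"
| "bys (PInp l b P) = bys P"
| "bys (POut l c t P) = bys P"
| "bys (PBang P) = bys P"
| "bys (PCase l x y P1 P2) = y # bys P1 @ bys P2"

fun bn :: "('n, 'x, 'y, 'l) proc \<Rightarrow> 'n list" where
  "bn PNil = []"
| "bn (PNu c P) = c # bn P"
| "bn (PPar P Q) = bn P @ bn Q"
| "bn (PInp l b P) = bn P"
| "bn (POut l c t P) = bn P"
| "bn (PBang P) = bn P"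
| "bn (PCase l x y P1 P2) = bn P1 @ bn P2"

definition bound_once :: "('n, 'x, 'y, 'l) proc \<Rightarrow> bool" where
  "bound_once P \<longleftrightarrow> distinct (bx P) \<and> distinct (bys P) \<and> distinct (bn P)"

fun labels :: "('n, 'x, 'y, 'l) proc \<Rightarrow> 'l list" where
  "labels PNil = []"
| "labels (PNu c P) = labels P"
| "labels (PPar P Q) = labels P @ labels Q"
| "labels (PInp l b P) = l # labels P"
| "labels (POut l c t P) = l # labels P"
| "labels (PBang P) = labels P"
| "labels (PCase l x y P1 P2) = l # labels P1 @ labels P2"

fun input_vars :: "('n, 'x, 'y, 'l) proc \<Rightarrow> 'x set" where
  "input_vars PNil = {}"
| "input_vars (PNu c P) = input_vars P"
| "input_vars (PPar P Q) = input_vars P \<union> input_vars Q"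
| "input_vars (PInp l b P) = set (bvb b) \<union> input_vars P"
| "input_vars (POut l c t P) = input_vars P"
| "input_vars (PBang P) = input_vars P"
| "input_vars (PCase l x y P1 P2) = {x} \<union> input_vars P1 \<union> input_vars P2"

datatype ('n, 'x, 'l) lit = LC 'n | LX 'x | LL 'l

datatype ('n, 'x, 'l) form =
    FTrue
  | FFalse
  | FAtom "('n, 'x, 'l) lit"
  | FNot "('n, 'x, 'l) form"
  | FAnd "('n, 'x, 'l) form" "('n, 'x, 'l) form"
  | FOr "('n, 'x, 'l) form" "('n, 'x, 'l) form"
  | FImp "('n, 'x, 'l) form" "('n, 'x, 'l) form"
  | FQ qguard "('n, 'x, 'l) form list"

fun atoms :: "('n, 'x, 'l) form \<Rightarrow> ('n, 'x, 'l) lit set" where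
  "atoms FTrue = {}"
| "atoms FFalse = {}"
| "atoms (FAtom p) = {p}"
| "atoms (FNot f) = atoms f"
| "atoms (FAnd f g) = atoms f \<union> atoms g"
| "atoms (FOr f g) = atoms f \<union> atoms g"
| "atoms (FImp f g) = atoms f \<union> atoms g"
| "atoms (FQ q fs) = \<Union> (set (map atoms fs))"

fun hp :: "('n, 'x) qbinder \<Rightarrow> ('n, 'x, 'l) form" where
  "hp (BIn c x) = FAtom (LC c)"
| "hp (BQ q bs) = FQ q (map hp bs)"

fun th :: "('n, 'x, 'l) form \<Rightarrow> ('n, 'x) qbinder \<Rightarrow> (('n, 'x, 'l) form \<times> ('n, 'x, 'l) lit) list" where
  "th \<phi> (BIn c x) = [(FAnd \<phi> (FAtom (LC c)), LX x)]"
| "th \<phi> (BQ q bs) = concat (map (th \<phi>) bs)"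

text \<open>Constraints phi ~> p are pairs (phi, p).\<close>
fun trans :: "('n, 'x, 'y, 'l) proc \<Rightarrow> ('n, 'x, 'l) form \<Rightarrow> (('n, 'x, 'l) form \<times> ('n, 'x, 'l) lit) list" where
  "trans PNil \<phi> = []"
| "trans (PBang P) \<phi> = trans P \<phi>"
| "trans (PPar P Q) \<phi> = trans P \<phi> @ trans Q \<phi>"
| "trans (PNu c P) \<phi> = trans P \<phi>"
| "trans (PInp l b P) \<phi> = trans P (FAnd \<phi> (hp b)) @ th \<phi> b @ [(\<phi>, LL l)]"
| "trans (POut l c t P) \<phi> = trans P \<phi> @ [(\<phi>, LC c)] @ [(\<phi>, LL l)]"
| "trans (PCase l x y P1 P2) \<phi> =
     trans P1 (FAnd \<phi> (FAtom (LX x))) @ trans P2 (FAnd \<phi> (FNot (FAtom (LX x)))) @ [(\<phi>, LL l)]"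

fun disjs :: "('n, 'x, 'l) form list \<Rightarrow> ('n, 'x, 'l) form" where
  "disjs [] = FFalse"
| "disjs [f] = f"
| "disjs (f # fs) = FOr f (disjs fs)"

definition normalise :: "(('n, 'x, 'l) form \<times> ('n, 'x, 'l) lit) list \<Rightarrow> ('n, 'x, 'l) form set" where
  "normalise C = {FImp (disjs [fst c. c \<leftarrow> C, snd c = p]) (FAtom p) | p. p \<in> snd ` set C}"

text \<open>P^l_=> : the label l is not used bys the translation as given in the context.\<close>
definition impl_set :: "('n, 'x, 'y, 'l) proc \<Rightarrow> 'l \<Rightarrow> ('n, 'x, 'l) form set" where
  "impl_set P l = normalise (trans P FTrue)"

end

theory Submission
  imports Defs
begin

lemma hp_atoms: "LX x \<notin> atoms (hp b)"
  by (induction b) auto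

lemma iv_sub: "input_vars P \<subseteq> set (bx P) \<union> fvx P"
  by (induction P) auto

lemma th_filter:
  "distinct (bvb b) \<Longrightarrow>
   (x \<notin> set (bvb b) \<longrightarrow> filter (\<lambda>c. snd c = LX x) (th \<phi> b) = []) \<and>
   (x \<in> set (bvb b) \<longrightarrow> (\<exists>c. filter (\<lambda>c. snd c = LX x) (th \<phi> b) = [(FAnd \<phi> (FAtom (LC c)), LX x)]))"
proof (induction b)
  case (BIn c y)
  then show ?case by auto
next
  case (BQ q bs)
  from BQ show ?case
  proof (induction bs)
    case Nil
    then show ?case by simp
  next
    case (Cons a bs)
    have da: "distinct (bvb a)" and dbs: "distinct (concat (map bvb bs))"
      and dj: "set (bvb a) \<inter> set (concat (map bvb bs)) = {}"
      using Cons.prems(2) by auto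
    have IHa: "(x \<notin> set (bvb a) \<longrightarrow> filter (\<lambda>c. snd c = LX x) (th \<phi> a) = []) \<and>
   (x \<in> set (bvb a) \<longrightarrow> (\<exists>c. filter (\<lambda>c. snd c = LX x) (th \<phi> a) = [(FAnd \<phi> (FAtom (LC c)), LX x)]))"
      using Cons.prems(1) da by auto
    have IHbs: "(x \<notin> set (bvb (BQ q bs)) \<longrightarrow> filter (\<lambda>c. snd c = LX x) (th \<phi> (BQ q bs)) = []) \<and>
   (x \<in> set (bvb (BQ q bs)) \<longrightarrow> (\<exists>c. filter (\<lambda>c. snd c = LX x) (th \<phi> (BQ q bs)) = [(FAnd \<phi> (FAtom (LC c)), LX x)]))"
      using Cons.IH Cons.prems(1) dbs by auto
    show ?case using IHa IHbs dj by auto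
  qed
qed

lemma compr_eq: "[fst c. c \<leftarrow> C, snd c = p] = map fst (filter (\<lambda>c. snd c = p) C)"
  by (induction C) auto

lemma key:
  "distinct (bx P) \<Longrightarrow>
   (x \<notin> set (bx P) \<longrightarrow> filter (\<lambda>c. snd c = LX x) (trans P \<phi>) = []) \<and>
   (x \<in> set (bx P) \<longrightarrow> x \<notin> fvx P \<longrightarrow> LX x \<notin> atoms \<phi> \<longrightarrow>
     (\<exists>\<psi>. filter (\<lambda>c. snd c = LX x) (trans P \<phi>) = [(\<psi>, LX x)] \<and> LX x \<notin> atoms \<psi>))"
proof (induction P arbitrary: \<phi>)
  case (PPar P1 P2)
  have d1: "distinct (bx P1)" and d2: "distinct (bx P2)" and dj: "set (bx P1) \<inter> set (bx P2) = {}"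
    using PPar.prems by auto
  note I1 = PPar.IH(1)[OF d1, of \<phi>]
  note I2 = PPar.IH(2)[OF d2, of \<phi>]
  show ?case
  proof (cases "x \<in> set (bx P1)")
    case True
    then have "x \<notin> set (bx P2)" using dj by blast
    then show ?thesis using True I1 I2 by simp
  next
    case False
    then show ?thesis using I1 I2 by simp
  qed
next
  case (PInp l b P)
  have db: "distinct (bvb b)" and dP: "distinct (bx P)" and dj: "set (bvb b) \<inter> set (bx P) = {}"
    using PInp.prems by auto
  note T = th_filter[OF db, of x \<phi>]
  note I = PInp.IH[OF dP, of "FAnd \<phi> (hp b)"]
  show ?case
  proof (cases "x \<in> set (bvb b)")
    case True
    then show ?thesis using T I dj by auto
  next
    case False
    then show ?thesis using T I hp_atoms[of x b] by auto
  qed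
next
  case (PCase l x' y P1 P2)
  have d1: "distinct (bx P1)" and d2: "distinct (bx P2)" and dj: "set (bx P1) \<inter> set (bx P2) = {}"
    using PCase.prems by auto
  note I1 = PCase.IH(1)[OF d1, of "FAnd \<phi> (FAtom (LX x'))"]
  note I2 = PCase.IH(2)[OF d2, of "FAnd \<phi> (FNot (FAtom (LX x')))"]
  show ?case
  proof (intro conjI impI)
    assume "x \<notin> set (bx (PCase l x' y P1 P2))"
    then show "filter (\<lambda>c. snd c = LX x) (trans (PCase l x' y P1 P2) \<phi>) = []"
      using I1 I2 by simp
  next
    assume a: "x \<in> set (bx (PCase l x' y P1 P2))" "x \<notin> fvx (PCase l x' y P1 P2)" "LX x \<notin> atoms \<phi>"
    have ne: "x' \<noteq> x" using a(2) by auto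
    show "\<exists>\<psi>. filter (\<lambda>c. snd c = LX x) (trans (PCase l x' y P1 P2) \<phi>) = [(\<psi>, LX x)] \<and> LX x \<notin> atoms \<psi>"
    proof (cases "x \<in> set (bx P1)")
      case True
      then have "x \<notin> set (bx P2)" using dj by blast
      then show ?thesis using True I1 I2 a ne by simp
    next
      case False
      then have "x \<in> set (bx P2)" using a(1) by simp
      then show ?thesis using False I1 I2 a ne by simp
    qed
  qed
qed auto

theorem lemmaB1:
  fixes P :: "('n, 'x, 'y, 'l) proc" and l :: 'l and x :: 'x
  assumes "closed P"
    and "bound_once P"
    and "distinct (labels P)"
    and "x \<in> input_vars P"
  shows "(\<exists>!\<phi>. FImp \<phi> (FAtom (LX x)) \<in> impl_set P l)
         \<and> (\<forall>\<phi>. FImp \<phi> (FAtom (LX x)) \<in> impl_set P l \<longrightarrow> LX x \<notin> atoms \<phi>)"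
proof -
  have fv: "fvx P = {}" using assms(1) by (simp add: closed_def)
  have d: "distinct (bx P)" using assms(2) by (simp add: bound_once_def)
  have xb: "x \<in> set (bx P)" using iv_sub[of P] assms(4) fv by auto
  obtain \<psi> where F: "filter (\<lambda>c. snd c = LX x) (trans P FTrue) = [(\<psi>, LX x)]"
    and na: "LX x \<notin> atoms \<psi>"
    using key[OF d, of x FTrue] xb fv by auto
  have L: "[fst c. c \<leftarrow> trans P FTrue, snd c = LX x] = [\<psi>]"
  proof -
    have "[fst c. c \<leftarrow> trans P FTrue, snd c = LX x] = map fst (filter (\<lambda>c. snd c = LX x) (trans P FTrue))"
      by (rule compr_eq)
    then show ?thesis using F by simp
  qed
  have mem: "LX x \<in> snd ` set (trans P FTrue)"
  proof -
    have "(\<psi>, LX x) \<in> set (filter (\<lambda>c. snd c = LX x) (trans P FTrue))" using F by simp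
    then show ?thesis by force
  qed
  have iff: "FImp \<phi> (FAtom (LX x)) \<in> impl_set P l \<longleftrightarrow> \<phi> = \<psi>" for \<phi>
    unfolding impl_set_def normalise_def using L mem by auto
  show ?thesis using iff na by auto
qed

end
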